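(* Let $G$ be a strategic game with players $1,\dots,n$. The $\mathcal{L}_\nu$-formula $$(\mathit{rat}_{gbr}\wedge\Box^*\mathit{rat}_{gbr})\rightarrow\nu X.\,O_{lsd}X$$ is a theorem of the proof system $\mathbf{R}$, where $gbr=(gbr_1,\dots,gbr_n)$ and $lsd=(lsd_1,\dots,lsd_n)$.
   Context: Strategic game $G=(T_1,\dots,T_n,<_1,\dots,<_n)$: arbitrary nonempty strategy sets $T_i$, $<_i$ a total linear order on $T=\prod_iT_i$, $\ge_i$ its reflexive closure; restriction $S=(S_1,\dots,S_n)$, $S_i\subseteq T_i$. $\mathcal{L}_O$: first-order formulas from atoms $C(a)$, $a\ge^i_cb$ ($a,b,c$ variables or constant $o$) with $\neg,\wedge,\exists$; abbreviations $\exists x\in C\,\phi:=\exists x(C(x)\wedge\phi)$, $\forall x\in C\,\phi:=\forall x(C(x)\to\phi)$. In an optimality model $(G,G',s)$ with assignment $\alpha$ ($o\mapsto s$): $C(x)$ iff $\alpha(x)_j\in G'_j$ for all $j$; $x\ge^i_zy$ iff $(\alpha(x)_i,\alpha(z)_{-i})\ge_i(\alpha(y)_i,\alpha(z)_{-i})$. Optimality condition for $i$: closed formula using only $\ge^i$; positive if every $C(\cdot)$ is under an even number of negations. Specific conditions: $gbr_i:=\exists z\in C\,\forall y\;o\ge^i_zy$ (global best response) and $lsd_i:=\forall y\in C\,\exists z\in C\;o\ge^i_zy$ (not locally strictly dominated). Belief model, $G_E$, and $\mathcal{L}_\nu$ with its semantics: $(\Omega,\bar s_1,\dots,\bar s_n,P_1,\dots,P_n)$;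 $(G_E)_i=\{\bar s_i(u):u\in E\}$; $\psi::=\mathit{rat}_{\phi_i}\mid X\mid\psi\wedge\psi\mid\neg\psi\mid\Box_i\psi\mid O_{\phi_i}\psi\mid\nu X.\psi$ ($\nu$-free body); $[\![\mathit{rat}_{\phi_i}]\!]_E=\{\omega:(G,G_{P_i(\omega)},\bar s(\omega))\models\phi_i\}$, $[\![X]\!]_E=E$, $[\![\Box_i\psi]\!]_E=\{\omega:P_i(\omega)\subseteq[\![\psi]\!]_E\}$, $[\![O_{\phi_i}\psi]\!]_E=\{\omega:(G,G_{[\![\psi]\!]_E},\bar s(\omega))\models\phi_i\}$, $[\![\nu X.\psi]\!]_E$ the transfinite-iteration outcome (starting from $\Omega$, intersections at limits) of $F\mapsto[\![\psi]\!]_F\cap F$. Abbreviations $\mathit{rat}_\phi,\Box\psi,O_\phi\psi$ as conjunctions over players and $\Box^*\psi:=\nu X.\Box(X\wedge\psi)$. Positive in $X$: each $X$ under an even number of negations and inside $O_{\phi_i}$ only for positive $\phi_i$. Proof system $\mathbf{P}$: propositional reasoning plus, for positive optimality conditions and $\psi$ positive in $X$: $\mathit{rat}_\phi\to(\Box\chi\to O_\phi\chi)$; $\nu X.\psi\to\psi[X\mapsto\nu X.\psi]$; from $\chi\to\psi[X\mapsto\chi]$ infer $\chi\to\nu X.\psi$. Proof system $\mathbf{R}$: $\mathbf{P}$ plus a standard first-order proof system for $\mathcal{L}_O$-formulas, plus the rules (Incl) from $\chi\to\psi$ infer $\nu X.\chi\to\nu X.\psi$, where $\chi$ is positive in $X$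 and $\psi$ is any $\nu$-free formula; and (Link) from $\phi_i\to\psi_i$ for all $i\in[1..n]$ (as $\mathcal{L}_O$-formulas) infer $O_\phi X\to O_\psi X$. *)

theory Defs
  imports Main
begin

datatype oterm = TV nat | TO

text \<open>Formulas of L_O built from C(a), a >=^i_c b (written Geq i a c b), negation,
  conjunction and existential quantification.\<close>
datatype oform =
    Cat oterm
  | Geq nat oterm oterm oterm
  | ONeg oform
  | OAnd oform oform
  | OEx nat oform

definition OImp :: "oform \<Rightarrow> oform \<Rightarrow> oform" where
  "OImp a b = ONeg (OAnd a (ONeg b))"

definition OAll :: "nat \<Rightarrow> oform \<Rightarrow> oform" where
  "OAll x a = ONeg (OEx x (ONeg a))"

definition OExC :: "nat \<Rightarrow> oform \<Rightarrow> oform" where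
  "OExC x a = OEx x (OAnd (Cat (TV x)) a)"

definition OAllC :: "nat \<Rightarrow> oform \<Rightarrow> oform" where
  "OAllC x a = OAll x (OImp (Cat (TV x)) a)"

fun tvars :: "oterm \<Rightarrow> nat set" where
  "tvars (TV x) = {x}"
| "tvars TO = {}"

fun ofv :: "oform \<Rightarrow> nat set" where
  "ofv (Cat a) = tvars a"
| "ofv (Geq i a c b) = tvars a \<union> tvars c \<union> tvars b"
| "ofv (ONeg p) = ofv p"
| "ofv (OAnd p q) = ofv p \<union> ofv q"
| "ofv (OEx x p) = ofv p - {x}"

fun only_player :: "nat \<Rightarrow> oform \<Rightarrow> bool" where
  "only_player i (Cat a) = True"
| "only_player i (Geq j a c b) = (j = i)"
| "only_player i (ONeg p) = only_player i p"
| "only_player i (OAnd p q) = (only_player i p \<and> only_player i q)"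
| "only_player i (OEx x p) = only_player i p"

definition opt_cond :: "nat \<Rightarrow> oform \<Rightarrow> bool" where
  "opt_cond i p \<longleftrightarrow> ofv p = {} \<and> only_player i p"

fun cpos :: "bool \<Rightarrow> oform \<Rightarrow> bool" where
  "cpos ev (Cat a) = ev"
| "cpos ev (Geq i a c b) = True"
| "cpos ev (ONeg p) = cpos (\<not> ev) p"
| "cpos ev (OAnd p q) = (cpos ev p \<and> cpos ev q)"
| "cpos ev (OEx x p) = cpos ev p"

definition positive_oc :: "oform \<Rightarrow> bool" where
  "positive_oc p \<longleftrightarrow> cpos True p"

fun tsubst :: "nat \<Rightarrow> oterm \<Rightarrow> oterm \<Rightarrow> oterm" where
  "tsubst x t (TV y) = (if y = x then t else TV y)"
| "tsubst x t TO = TO"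

fun osubst :: "nat \<Rightarrow> oterm \<Rightarrow> oform \<Rightarrow> oform" where
  "osubst x t (Cat a) = Cat (tsubst x t a)"
| "osubst x t (Geq i a c b) = Geq i (tsubst x t a) (tsubst x t c) (tsubst x t b)"
| "osubst x t (ONeg p) = ONeg (osubst x t p)"
| "osubst x t (OAnd p q) = OAnd (osubst x t p) (osubst x t q)"
| "osubst x t (OEx y p) = (if y = x then OEx y p else OEx y (osubst x t p))"

fun substitutable :: "nat \<Rightarrow> oterm \<Rightarrow> oform \<Rightarrow> bool" where
  "substitutable x t (Cat a) = True"
| "substitutable x t (Geq i a c b) = True"
| "substitutable x t (ONeg p) = substitutable x t p"
| "substitutable x t (OAnd p q) = (substitutable x t p \<and> substitutable x t q)"
| "substitutable x t (OEx y p) =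
     (y = x \<or> x \<notin> ofv p \<or> (y \<notin> tvars t \<and> substitutable x t p))"

fun opeval :: "(oform \<Rightarrow> bool) \<Rightarrow> oform \<Rightarrow> bool" where
  "opeval V (ONeg p) = (\<not> opeval V p)"
| "opeval V (OAnd p q) = (opeval V p \<and> opeval V q)"
| "opeval V p = V p"

definition otaut :: "oform \<Rightarrow> bool" where
  "otaut p \<longleftrightarrow> (\<forall>V. opeval V p)"

inductive fo_prov :: "oform \<Rightarrow> bool" where
  fo_taut: "otaut p \<Longrightarrow> fo_prov p"
| fo_exI: "substitutable x t p \<Longrightarrow> fo_prov (OImp (osubst x t p) (OEx x p))"
| fo_mp: "fo_prov (OImp p q) \<Longrightarrow> fo_prov p \<Longrightarrow> fo_prov q"
| fo_exE: "fo_prov (OImp p q) \<Longrightarrow> x \<notin> ofv q \<Longrightarrow> fo_prov (OImp (OEx x p) q)"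

text \<open>gbr_i := exists z in C. forall y. o >=^i_z y   (z = variable 0, y = variable 1)\<close>
definition gbr :: "nat \<Rightarrow> oform" where
  "gbr i = OExC 0 (OAll 1 (Geq i TO (TV 0) (TV 1)))"

definition lsd :: "nat \<Rightarrow> oform" where
  "lsd i = OAllC 1 (OExC 0 (Geq i TO (TV 0) (TV 1)))"

datatype nform =
    Rat nat oform
  | XV
  | NConj nform nform
  | NNeg nform
  | Box nat nform
  | Opt nat oform nform
  | Nu nform

definition NImp :: "nform \<Rightarrow> nform \<Rightarrow> nform" where
  "NImp a b = NNeg (NConj a (NNeg b))"

fun nufree :: "nform \<Rightarrow> bool" where
  "nufree (Rat i p) = True"
| "nufree XV = True"
| "nufree (NConj a b) = (nufree a \<and> nufree b)"
| "nufree (NNeg a) = nufree a"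
| "nufree (Box i a) = nufree a"
| "nufree (Opt i p a) = nufree a"
| "nufree (Nu a) = False"

fun nwf :: "nat \<Rightarrow> nform \<Rightarrow> bool" where
  "nwf n (Rat i p) = (1 \<le> i \<and> i \<le> n \<and> opt_cond i p)"
| "nwf n XV = True"
| "nwf n (NConj a b) = (nwf n a \<and> nwf n b)"
| "nwf n (NNeg a) = nwf n a"
| "nwf n (Box i a) = (1 \<le> i \<and> i \<le> n \<and> nwf n a)"
| "nwf n (Opt i p a) = (1 \<le> i \<and> i \<le> n \<and> opt_cond i p \<and> nwf n a)"
| "nwf n (Nu a) = (nufree a \<and> nwf n a)"

fun hasX :: "nform \<Rightarrow> bool" where
  "hasX (Rat i p) = False"
| "hasX XV = True"
| "hasX (NConj a b) = (hasX a \<or> hasX b)"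
| "hasX (NNeg a) = hasX a"
| "hasX (Box i a) = hasX a"
| "hasX (Opt i p a) = hasX a"
| "hasX (Nu a) = False"

fun xpos :: "bool \<Rightarrow> nform \<Rightarrow> bool" where
  "xpos ev (Rat i p) = True"
| "xpos ev XV = ev"
| "xpos ev (NConj a b) = (xpos ev a \<and> xpos ev b)"
| "xpos ev (NNeg a) = xpos (\<not> ev) a"
| "xpos ev (Box i a) = xpos ev a"
| "xpos ev (Opt i p a) = (xpos ev a \<and> (hasX a \<longrightarrow> positive_oc p))"
| "xpos ev (Nu a) = True"

definition positive_in_X :: "nform \<Rightarrow> bool" where
  "positive_in_X a \<longleftrightarrow> xpos True a"

fun substX :: "nform \<Rightarrow> nform \<Rightarrow> nform" where
  "substX c (Rat i p) = Rat i p"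
| "substX c XV = c"
| "substX c (NConj a b) = NConj (substX c a) (substX c b)"
| "substX c (NNeg a) = NNeg (substX c a)"
| "substX c (Box i a) = Box i (substX c a)"
| "substX c (Opt i p a) = Opt i p (substX c a)"
| "substX c (Nu a) = Nu a"

text \<open>Conjunction over a nonempty list.\<close>
fun bigconj :: "nform list \<Rightarrow> nform" where
  "bigconj [] = NNeg (NConj XV (NNeg XV))"
| "bigconj [a] = a"
| "bigconj (a # as) = NConj a (bigconj as)"

definition players :: "nat \<Rightarrow> nat list" where
  "players n = [1..<Suc n]"

definition rat_all :: "nat \<Rightarrow> (nat \<Rightarrow> oform) \<Rightarrow> nform" where
  "rat_all n phi = bigconj (map (\<lambda>i. Rat i (phi i)) (players n))"

definition box_all :: "nat \<Rightarrow> nform \<Rightarrow> nform" where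
  "box_all n a = bigconj (map (\<lambda>i. Box i a) (players n))"

definition opt_all :: "nat \<Rightarrow> (nat \<Rightarrow> oform) \<Rightarrow> nform \<Rightarrow> nform" where
  "opt_all n phi a = bigconj (map (\<lambda>i. Opt i (phi i) a) (players n))"

definition box_star :: "nat \<Rightarrow> nform \<Rightarrow> nform" where
  "box_star n a = Nu (box_all n (NConj XV a))"

fun npeval :: "(nform \<Rightarrow> bool) \<Rightarrow> nform \<Rightarrow> bool" where
  "npeval V (NNeg a) = (\<not> npeval V a)"
| "npeval V (NConj a b) = (npeval V a \<and> npeval V b)"
| "npeval V a = V a"

definition ntaut :: "nform \<Rightarrow> bool" where
  "ntaut a \<longleftrightarrow> (\<forall>V. npeval V a)"

definition pos_opt_conds :: "nat \<Rightarrow> (nat \<Rightarrow> oform) \<Rightarrow> bool" where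
  "pos_opt_conds n phi \<longleftrightarrow> (\<forall>i\<in>{1..n}. opt_cond i (phi i) \<and> positive_oc (phi i))"

inductive R_prov :: "nat \<Rightarrow> nform \<Rightarrow> bool" for n :: nat where
  R_taut: "nwf n a \<Longrightarrow> ntaut a \<Longrightarrow> R_prov n a"
| R_mp: "R_prov n (NImp a b) \<Longrightarrow> R_prov n a \<Longrightarrow> R_prov n b"
| R_rat: "pos_opt_conds n phi \<Longrightarrow> nwf n c \<Longrightarrow>
    R_prov n (NImp (rat_all n phi) (NImp (box_all n c) (opt_all n phi c)))"
| R_unfold: "nufree a \<Longrightarrow> nwf n a \<Longrightarrow> positive_in_X a \<Longrightarrow>
    R_prov n (NImp (Nu a) (substX (Nu a) a))"
| R_induct: "nufree a \<Longrightarrow> nwf n a \<Longrightarrow> positive_in_X a \<Longrightarrow> R_prov n (NImp c (substX c a)) \<Longrightarrow>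
    R_prov n (NImp c (Nu a))"
| R_incl: "nufree c \<Longrightarrow> positive_in_X c \<Longrightarrow> nufree b \<Longrightarrow> R_prov n (NImp c b) \<Longrightarrow>
    R_prov n (NImp (Nu c) (Nu b))"
| R_link: "(\<forall>i\<in>{1..n}. opt_cond i (phi i) \<and> opt_cond i (psi i) \<and> fo_prov (OImp (phi i) (psi i))) \<Longrightarrow>
    R_prov n (NImp (opt_all n phi XV) (opt_all n psi XV))"

end

theory Submission
  imports Defs
begin

lemma tsubst_id: "tsubst x (TV x) t = t"
  by (cases t) auto

lemma osubst_id: "osubst x (TV x) p = p"
  by (induction p) (auto simp: tsubst_id)

lemma fo_taut_mp: "otaut (OImp a b) \<Longrightarrow> fo_prov a \<Longrightarrow> fo_prov b"
  using fo_mp fo_taut by blast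

lemma gbr_lsd: "fo_prov (OImp (gbr i) (lsd i))"
proof -
  define g where "g = Geq i TO (TV 0) (TV 1)"
  define G where "G = ONeg (OEx 1 (ONeg g))"
  define p0 where "p0 = OAnd (Cat (TV 0)) g"
  define E where "E = OEx 0 p0"
  define B where "B = OImp (Cat (TV 1)) E"
  have h1: "fo_prov (OImp (ONeg g) (OEx 1 (ONeg g)))"
    using fo_exI[of 1 "TV 1" "ONeg g"] by (simp add: osubst_id g_def)
  have h2: "fo_prov (OImp p0 E)"
    using fo_exI[of 0 "TV 0" p0] by (simp add: osubst_id E_def p0_def g_def)
  have t1: "otaut (OImp (OImp (ONeg g) (OEx 1 (ONeg g)))
     (OImp (OImp p0 E) (OImp (ONeg B) (ONeg (OAnd (Cat (TV 0)) G)))))"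
    unfolding otaut_def B_def G_def p0_def E_def g_def by (auto simp: OImp_def)
  have T1: "fo_prov (OImp (ONeg B) (ONeg (OAnd (Cat (TV 0)) G)))"
    using fo_mp[OF fo_taut_mp[OF t1 h1] h2] .
  have T2: "fo_prov (OImp (OEx 1 (ONeg B)) (ONeg (OAnd (Cat (TV 0)) G)))"
    by (rule fo_exE[OF T1]) (simp add: G_def g_def)
  have t3: "otaut (OImp (OImp (OEx 1 (ONeg B)) (ONeg (OAnd (Cat (TV 0)) G)))
       (OImp (OAnd (Cat (TV 0)) G) (ONeg (OEx 1 (ONeg B)))))"
    unfolding otaut_def B_def G_def p0_def E_def g_def by (auto simp: OImp_def)
  have T3: "fo_prov (OImp (OAnd (Cat (TV 0)) G) (ONeg (OEx 1 (ONeg B))))"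
    using fo_taut_mp[OF t3 T2] .
  have L: "lsd i = ONeg (OEx 1 (ONeg B))"
    by (simp add: lsd_def OAllC_def OAll_def B_def E_def p0_def g_def OExC_def)
  have Gb: "gbr i = OEx 0 (OAnd (Cat (TV 0)) G)"
    by (simp add: gbr_def OExC_def OAll_def G_def g_def)
  have T4: "fo_prov (OImp (OEx 0 (OAnd (Cat (TV 0)) G)) (ONeg (OEx 1 (ONeg B))))"
    by (rule fo_exE[OF T3]) (simp add: B_def E_def p0_def g_def OImp_def)
  then show ?thesis using L Gb by simp
qed

lemma bigconj_prop:
  assumes "\<And>a b. P (NConj a b) = (P a \<and> P b)"
  shows "l \<noteq> [] \<Longrightarrow> P (bigconj l) = (\<forall>a\<in>set l. P a)"
  by (induction l rule: bigconj.induct) (auto simp: assms)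

lemma substX_bigconj: "l \<noteq> [] \<Longrightarrow> substX c (bigconj l) = bigconj (map (substX c) l)"
  by (induction l rule: bigconj.induct) auto

lemma players_ne: "1 \<le> n \<Longrightarrow> players n \<noteq> []"
  by (simp add: players_def)

lemma set_players: "set (players n) = {1..n}"
  by (auto simp: players_def)

lemma opt_gbr: "opt_cond i (gbr i)"
  by (simp add: opt_cond_def gbr_def OExC_def OAll_def)

lemma opt_lsd: "opt_cond i (lsd i)"
  by (simp add: opt_cond_def lsd_def OExC_def OAll_def OAllC_def OImp_def) blast

lemma pos_gbr: "positive_oc (gbr i)"
  by (simp add: positive_oc_def gbr_def OExC_def OAll_def)

lemma R_trans: "R_prov n (NImp a b) \<Longrightarrow> R_prov n (NImp b c) \<Longrightarrow> nwf n a \<Longrightarrow> nwf n b \<Longrightarrow> nwf n c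
   \<Longrightarrow> R_prov n (NImp a c)"
proof -
  assume h: "R_prov n (NImp a b)" "R_prov n (NImp b c)" "nwf n a" "nwf n b" "nwf n c"
  have "R_prov n (NImp (NImp a b) (NImp (NImp b c) (NImp a c)))"
    by (rule R_taut) (use h in \<open>auto simp: NImp_def ntaut_def\<close>)
  then show ?thesis using h R_mp by blast
qed

theorem theorem2:
  fixes n :: nat
  assumes "1 \<le> n"
  shows "R_prov n (NImp (NConj (rat_all n gbr) (box_star n (rat_all n gbr))) (Nu (opt_all n lsd XV)))"
proof -
  have ne: "players n \<noteq> []" using assms players_ne by blast
  define A where "A = rat_all n gbr"
  define body where "body = box_all n (NConj XV A)"
  define S where "S = Nu body"
  define c where "c = NConj S A"
  have nufA: "nufree A" unfolding A_def rat_all_def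
    using bigconj_prop[of nufree, OF _ ] ne by simp
  have nwfA: "nwf n A" unfolding A_def rat_all_def
    using bigconj_prop[of "nwf n"] ne by (simp add: set_players opt_gbr)
  have xA: "substX S A = A" unfolding A_def rat_all_def
    using substX_bigconj ne by (simp add: comp_def)
  have xpA: "xpos True A" unfolding A_def rat_all_def
    using bigconj_prop[of "xpos True"] ne by simp
  have nufb: "nufree body" unfolding body_def box_all_def
    using bigconj_prop[of nufree] ne nufA by simp
  have nwfb: "nwf n body" unfolding body_def box_all_def
    using bigconj_prop[of "nwf n"] ne nwfA by (simp add: set_players)
  have posb: "positive_in_X body" unfolding positive_in_X_def body_def box_all_def
    using bigconj_prop[of "xpos True"] ne xpA by simp
  have nwfS: "nwf n S" using S_def nufb nwfb by simp
  have nwfc: "nwf n c" using c_def nwfS nwfA by simp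
  have unf: "R_prov n (NImp S (box_all n c))"
  proof -
    have "R_prov n (NImp S (substX S body))" unfolding S_def using R_unfold nufb nwfb posb by blast
    moreover have "substX S body = box_all n c" unfolding body_def box_all_def c_def
      using substX_bigconj ne xA by (simp add: comp_def)
    ultimately show ?thesis by simp
  qed
  have pc: "pos_opt_conds n gbr" by (simp add: pos_opt_conds_def opt_gbr pos_gbr)
  have rat: "R_prov n (NImp A (NImp (box_all n c) (opt_all n gbr c)))"
    unfolding A_def using R_rat[OF pc nwfc] .
  have nwfBc: "nwf n (box_all n c)" unfolding box_all_def
    using bigconj_prop[of "nwf n"] ne nwfc by (simp add: set_players)
  have nwfOc: "nwf n (opt_all n gbr c)" unfolding opt_all_def
    using bigconj_prop[of "nwf n"] ne nwfc by (simp add: set_players opt_gbr)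
  define a where "a = opt_all n gbr XV"
  have sa: "substX c a = opt_all n gbr c" unfolding a_def opt_all_def
    using substX_bigconj ne by (simp add: comp_def)
  have nufa: "nufree a" unfolding a_def opt_all_def
    using bigconj_prop[of nufree] ne by simp
  have nwfa: "nwf n a" unfolding a_def opt_all_def
    using bigconj_prop[of "nwf n"] ne by (simp add: set_players opt_gbr)
  have posa: "positive_in_X a" unfolding positive_in_X_def a_def opt_all_def
    using bigconj_prop[of "xpos True"] ne by (simp add: pos_gbr)
  have step: "R_prov n (NImp c (opt_all n gbr c))"
  proof -
    have "R_prov n (NImp (NImp A (NImp (box_all n c) (opt_all n gbr c)))
       (NImp (NImp S (box_all n c)) (NImp c (opt_all n gbr c))))"
      by (rule R_taut) (use nwfA nwfS nwfBc nwfOc nwfc in \<open>auto simp: NImp_def ntaut_def c_def\<close>)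
    then show ?thesis using rat unf R_mp by blast
  qed
  have P1: "R_prov n (NImp c (Nu a))"
    using R_induct[OF nufa nwfa posa] step sa by simp
  define b where "b = opt_all n lsd XV"
  have nufbb: "nufree b" unfolding b_def opt_all_def
    using bigconj_prop[of nufree] ne by simp
  have nwfbb: "nwf n b" unfolding b_def opt_all_def
    using bigconj_prop[of "nwf n"] ne by (simp add: set_players opt_lsd)
  have link: "R_prov n (NImp a b)" unfolding a_def b_def
    by (rule R_link) (simp add: opt_gbr opt_lsd gbr_lsd)
  have P2: "R_prov n (NImp (Nu a) (Nu b))"
    using R_incl[OF nufa posa nufbb link] .
  have P3: "R_prov n (NImp c (Nu b))"
    using R_trans[OF P1 P2] nwfc nufa nwfa nufbb nwfbb by simp
  have "R_prov n (NImp (NImp c (Nu b)) (NImp (NConj A S) (Nu b)))"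
    by (rule R_taut) (use nwfA nwfS nufbb nwfbb in \<open>auto simp: NImp_def ntaut_def c_def\<close>)
  then have "R_prov n (NImp (NConj A S) (Nu b))" using P3 R_mp by blast
  then show ?thesis unfolding A_def S_def body_def b_def box_star_def .
qed

end
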